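(* Let $\varphi$ be a hexagonal grid. For a triangle $\mathcal{T}_i$ of the grid, listed as $(\varphi(\{p,q\}),\varphi(\{q,s\}),\varphi(\{s,p\}))$ with $p,q,s$ counterclockwise, let $a_i,b_i,c_i$ be its side lengths and $S_i$ twice its signed area (positive if the listed vertices are counterclockwise). Then the quantity $$a_i^2+b_i^2+c_i^2-2\sqrt3\,S_i$$ takes the same value for all triangles $\mathcal{T}_i$ of the grid.
   Context: Let $\zeta=e^{i\pi/3}$ and $\Lambda=\{m+n\zeta: m,n\in\mathbb{Z}\}$. Call $p,q\in\Lambda$ adjacent if $|p-q|=1$, and let $\mathcal{E}$ be the set of unordered pairs $\{p,q\}$ of adjacent lattice points. A hexagonal grid is a map $\varphi:\mathcal{E}\to\mathbb{C}$ such that for every $p\in\Lambda$ there exist $c_p,r_p\in\mathbb{C}$ with $\varphi(\{p,p+\zeta^k\})=c_p+r_p\zeta^k$ for $k=0,\dots,5$. Thus the six points form a regular, possibly degenerate, hexagon $H_p$ listed counterclockwise. For each set $\{p,q,s\}\subset\Lambda$ of three pairwise adjacent lattice points listed counterclockwise, the corresponding triangle of the grid is $(\varphi(\{p,q\}),\varphi(\{q,s\}),\varphi(\{s,p\}))$. The reference triangle of $\varphi$ is $(\varphi(\{0,1\}),\varphi(\{1,\zeta\}),\varphi(\{\zeta,0\}))$. *)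

theory Defs
  imports Complex_Main
begin

definition zeta :: complex where
  "zeta = exp (\<i> * of_real (pi / 3))"

definition lattice :: "complex set" where
  "lattice = {of_int m + of_int n * zeta | m n. True}"

definition adjacent :: "complex \<Rightarrow> complex \<Rightarrow> bool" where
  "adjacent p q \<longleftrightarrow> p \<in> lattice \<and> q \<in> lattice \<and> cmod (p - q) = 1"

text \<open>Edges are unordered pairs, represented as two-element sets; a grid is a map
  from such sets to complex numbers (values on non-edges are irrelevant).\<close>

definition hex_grid :: "(complex set \<Rightarrow> complex) \<Rightarrow> bool" where
  "hex_grid \<phi> \<longleftrightarrow> (\<forall>p\<in>lattice. \<exists>c r. \<forall>k::nat<6. \<phi> {p, p + zeta ^ k} = c + r * zeta ^ k)"

definition signed_area2 :: "complex \<Rightarrow> complex \<Rightarrow> complex \<Rightarrow> real" where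
  "signed_area2 A B C = Im (cnj (B - A) * (C - A))"

definition ccw_triple :: "complex \<Rightarrow> complex \<Rightarrow> complex \<Rightarrow> bool" where
  "ccw_triple p q s \<longleftrightarrow> adjacent p q \<and> adjacent q s \<and> adjacent s p \<and> signed_area2 p q s > 0"

definition grid_triangle :: "(complex set \<Rightarrow> complex) \<Rightarrow> complex \<Rightarrow> complex \<Rightarrow> complex
    \<Rightarrow> complex \<times> complex \<times> complex" where
  "grid_triangle \<phi> p q s = (\<phi> {p, q}, \<phi> {q, s}, \<phi> {s, p})"

definition tri_quantity :: "complex \<times> complex \<times> complex \<Rightarrow> real" where
  "tri_quantity T = (case T of (A, B, C) \<Rightarrow>
     (cmod (B - C))\<^sup>2 + (cmod (C - A))\<^sup>2 + (cmod (A - B))\<^sup>2 - 2 * sqrt 3 * signed_area2 A B C)"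

end

theory Submission
  imports Defs
begin
lemma zeta_eq: "zeta = Complex (1/2) (sqrt 3 / 2)"
  unfolding zeta_def by (simp add: complex_eq_iff cos_60 sin_60 exp_eq_polar Re_exp Im_exp)
lemma zeta2: "zeta^2 = zeta - 1"
  by (simp add: zeta_eq complex_eq_iff power2_eq_square)
lemma zeta3: "zeta^3 = -1"
proof -
  have "zeta^3 = zeta * zeta^2" by (simp add: power3_eq_cube power2_eq_square)
  also have "... = zeta * (zeta - 1)" by (simp add: zeta2)
  also have "... = zeta^2 - zeta" by (simp add: power2_eq_square algebra_simps)
  finally show ?thesis by (simp add: zeta2)
qed
lemma zeta6: "zeta^6 = 1"
proof -
  have "zeta^6 = (zeta^3)^2" by (simp flip: power_mult)
  thus ?thesis by (simp add: zeta3)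
qed
lemma zeta_pow_mod: "zeta^k = zeta^(k mod 6)"
proof -
  have "zeta^k = zeta^(6*(k div 6) + k mod 6)" by simp
  also have "... = (zeta^6)^(k div 6) * zeta^(k mod 6)" by (simp only: power_add power_mult)
  finally have "zeta^k = (zeta^6)^(k div 6) * zeta^(k mod 6)" .
  thus ?thesis by (simp add: zeta6)
qed
lemma zeta5: "zeta^5 = 1 - zeta"
proof -
  have "zeta^5 = zeta^3 * zeta^2" by (simp flip: power_add)
  thus ?thesis by (simp add: zeta3 zeta2)
qed
lemma zeta4: "zeta^4 = - zeta"
proof -
  have "zeta^4 = zeta^3 * zeta" by (simp flip: power_Suc2)
  thus ?thesis by (simp add: zeta3)
qed
lemma cnj_zeta: "cnj zeta = 1 - zeta"
  by (simp add: zeta_eq complex_eq_iff)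
lemma cmod_zeta: "cmod zeta = 1"
  by (simp add: zeta_eq cmod_def power_divide)
lemma lat_coord: "of_int a + of_int b * zeta = Complex (a + b/2) (b * sqrt 3 / 2)"
  unfolding zeta_eq by (simp add: complex_eq_iff)
lemma normsq: "(cmod (of_int a + of_int b * zeta))^2 = of_int (a^2 + a*b + b^2)"
  unfolding lat_coord cmod_power2 by (simp add: power2_eq_square algebra_simps)
lemma improd: "Im (cnj (of_int a + of_int b * zeta) * (of_int c + of_int d * zeta)) = sqrt 3 / 2 * of_int (a*d - b*c)"
  unfolding lat_coord by (simp add: field_simps)
lemma int_unit: "(a::int)^2 + a*b + b^2 = 1 \<Longrightarrow> a \<in> {-1,0,1} \<and> b \<in> {-1,0,1}"
proof -
  assume h: "a^2 + a*b + b^2 = 1"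
  have "(2*a+b)^2 + 3*b^2 = 4" using h by (simp add: power2_eq_square algebra_simps)
  hence "b^2 \<le> 1" by (smt (verit) zero_le_power2)
  hence b: "\<bar>b\<bar> \<le> 1" by (metis abs_le_square_iff abs_one power_one_right one_power2)
  have "(2*b+a)^2 + 3*a^2 = 4" using h by (simp add: power2_eq_square algebra_simps)
  hence "a^2 \<le> 1" by (smt (verit) zero_le_power2)
  hence a: "\<bar>a\<bar> \<le> 1" by (metis abs_le_square_iff abs_one one_power2)
  show ?thesis using a b by auto
qed

lemma lat_iff: "p \<in> lattice \<longleftrightarrow> (\<exists>m n. p = of_int m + of_int n * zeta)"
  unfolding lattice_def by auto

lemma lat_add:
  assumes "p \<in> lattice" "q \<in> lattice" shows "p + q \<in> lattice"
proof -
  obtain m n m' n' where "p = of_int m + of_int n * zeta" "q = of_int m' + of_int n' * zeta"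
    using assms unfolding lat_iff by blast
  hence "p + q = of_int (m + m') + of_int (n + n') * zeta" by (simp add: algebra_simps)
  thus ?thesis unfolding lat_iff by blast
qed

lemma lat_diff:
  assumes "p \<in> lattice" "q \<in> lattice" shows "\<exists>a b. q - p = of_int a + of_int b * zeta"
proof -
  obtain m n m' n' where "p = of_int m + of_int n * zeta" "q = of_int m' + of_int n' * zeta"
    using assms unfolding lat_iff by blast
  hence "q - p = of_int (m' - m) + of_int (n' - n) * zeta" by (simp add: algebra_simps)
  thus ?thesis by blast
qed

lemma zeta_pow_cases: "zeta^k \<in> {1, zeta, zeta - 1, -1, - zeta, 1 - zeta}"
proof -
  have "k mod 6 < 6" by simp
  hence "k mod 6 \<in> {0,1,2,3,4,5}" by auto
  moreover have "zeta^k = zeta^(k mod 6)" by (rule zeta_pow_mod)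
  ultimately show ?thesis using zeta2 zeta3 zeta4 zeta5 by (elim insertE) auto
qed

lemma zeta_pow_lat_cases: "zeta^k \<in> {of_int 1 + of_int 0 * zeta, of_int 0 + of_int 1 * zeta, of_int (-1) + of_int 1 * zeta,
   of_int (-1) + of_int 0 * zeta, of_int 0 + of_int (-1) * zeta, of_int 1 + of_int (-1) * zeta}"
  using zeta_pow_cases[of k] by simp

lemma lat_zeta_pow: "zeta^k \<in> lattice"
  using zeta_pow_lat_cases[of k] unfolding lat_iff by blast

lemma unit_pow:
  assumes h: "a^2 + a*b + b^2 = (1::int)"
  shows "\<exists>k. of_int a + of_int b * zeta = zeta^k"
proof -
  have "a \<in> {-1,0,1}" "b \<in> {-1,0,1}" using int_unit[OF h] by auto
  hence "(a,b) = (1,0) \<or> (a,b) = (0,1) \<or> (a,b) = (-1,1) \<or> (a,b) = (-1,0) \<or> (a,b) = (0,-1) \<or> (a,b) = (1,-1)"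
    using h by (auto simp: power2_eq_square)
  thus ?thesis
    apply (elim disjE)
    apply (rule exI[of _ 0], simp)
    apply (rule exI[of _ 1], simp)
    apply (rule exI[of _ 2], simp add: zeta2)
    apply (rule exI[of _ 3], simp add: zeta3)
    apply (rule exI[of _ 4], simp add: zeta4)
    apply (rule exI[of _ 5], simp add: zeta5)
    done
qed

lemma int_ccw:
  fixes a b c d :: int
  assumes "a^2 + a*b + b^2 = 1" "c^2 + c*d + d^2 = 1"
    "(c-a)^2 + (c-a)*(d-b) + (d-b)^2 = 1" "a*d - b*c > 0"
  shows "c = -b \<and> d = a + b"
proof -
  have "a \<in> {-1,0,1}" "b \<in> {-1,0,1}" "c \<in> {-1,0,1}" "d \<in> {-1,0,1}"
    using int_unit assms by blast+
  thus ?thesis using assms by (auto simp: power2_eq_square)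
qed

lemma ccw_char:
  assumes "ccw_triple p q s"
  shows "p \<in> lattice \<and> (\<exists>k. q = p + zeta^k \<and> s = p + zeta^(Suc k))"
proof -
  have P: "p \<in> lattice" "q \<in> lattice" "s \<in> lattice" and n1: "cmod (p - q) = 1" "cmod (q - s) = 1" "cmod (s - p) = 1"
    and sa: "signed_area2 p q s > 0"
    using assms unfolding ccw_triple_def adjacent_def by auto
  obtain a b where ab: "q - p = of_int a + of_int b * zeta" using lat_diff P by blast
  obtain c d where cd: "s - p = of_int c + of_int d * zeta" using lat_diff P by blast
  have "s - q = of_int (c - a) + of_int (d - b) * zeta"
    using ab cd by (simp add: algebra_simps)
  have e1: "a^2 + a*b + b^2 = 1"
  proof -
    have "cmod (q - p) = 1" using n1 by (simp add: norm_minus_commute)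
    hence "real_of_int (a^2 + a*b + b^2) = 1" using normsq[of a b] ab by simp
    thus ?thesis by linarith
  qed
  have e2: "c^2 + c*d + d^2 = 1"
  proof -
    have "real_of_int (c^2 + c*d + d^2) = 1" using normsq[of c d] cd n1 by simp
    thus ?thesis by linarith
  qed
  have e3: "(c-a)^2 + (c-a)*(d-b) + (d-b)^2 = 1"
  proof -
    have "cmod (s - q) = 1" using n1 by (simp add: norm_minus_commute)
    hence "real_of_int ((c-a)^2 + (c-a)*(d-b) + (d-b)^2) = 1" using normsq[of "c-a" "d-b"] \<open>s - q = _\<close> by simp
    thus ?thesis by linarith
  qed
  have "sqrt 3 / 2 * of_int (a*d - b*c) > 0"
    using sa improd[of a b c d] ab cd unfolding signed_area2_def by simp
  hence "real_of_int (a*d - b*c) > 0" by (simp only: zero_less_mult_iff) simp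
  hence e4: "a*d - b*c > 0" by (simp only: of_int_0_less_iff)
  have cd': "c = -b" "d = a + b" using int_ccw[OF e1 e2 e3 e4] by auto
  obtain k where k: "of_int a + of_int b * zeta = zeta^k" using unit_pow[OF e1] by blast
  have "(of_int a + of_int b * zeta) * zeta = of_int a * zeta + of_int b * zeta^2"
    by (simp add: power2_eq_square algebra_simps)
  also have "... = of_int a * zeta + of_int b * (zeta - 1)" by (simp add: zeta2)
  also have "... = of_int c + of_int d * zeta" using cd' by (simp add: algebra_simps)
  finally have "s - p = (of_int a + of_int b * zeta) * zeta" using cd by simp
  hence sp: "s - p = zeta^k * zeta" by (simp only: k)
  have "s = p + zeta^(Suc k)" using sp by (metis power_Suc2 diff_add_cancel add.commute)
  moreover have "q - p = zeta^k" using ab by (simp only: k)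
  hence "q = p + zeta^k" by (metis diff_add_cancel add.commute)
  ultimately show ?thesis using P by blast
qed

lemma hex_at:
  assumes "hex_grid \<phi>" "p \<in> lattice"
  shows "\<exists>c r. \<forall>k. \<phi> {p, p + zeta^k} = c + r * zeta^k"
proof -
  obtain c r where h: "\<forall>k::nat<6. \<phi> {p, p + zeta ^ k} = c + r * zeta ^ k"
    using assms unfolding hex_grid_def by blast
  have "\<phi> {p, p + zeta^k} = c + r * zeta^k" for k
    using h[rule_format, of "k mod 6"] zeta_pow_mod[of k] by simp
  thus ?thesis by blast
qed

lemma tq_alt: "tri_quantity (A, B, C) = 2 * (cmod (A - C))^2 + 2 * (cmod (B - C))^2 - 4 * Re (cnj (A - C) * (B - C) * cnj zeta)"
  unfolding tri_quantity_def signed_area2_def cmod_power2 zeta_eq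
  by (simp add: power2_eq_square algebra_simps)

lemma tq_cyc: "tri_quantity (A, B, C) = tri_quantity (B, C, A)"
  unfolding tri_quantity_def signed_area2_def cmod_power2
  by (simp add: power2_eq_square algebra_simps)

lemma cmod_1mz: "cmod (1 - zeta) = 1"
  by (simp add: zeta_eq cmod_def power_divide)
lemma cmod_zm1: "cmod (zeta - 1) = 1"
  by (simp add: zeta_eq cmod_def power_divide)

lemma cnj_u: "cmod u = 1 \<Longrightarrow> cnj u * u = 1"
  by (metis complex_norm_square mult.commute of_real_1 one_power2)

lemma key:
  assumes u: "cmod u = 1" and cs: "cs = cp + rp*(u*zeta) + rs*(u*zeta)"
  shows "tri_quantity (cp + rp*u, cs + rs*(u*(1-zeta)), cp + rp*(u*zeta))
       = tri_quantity (cp + rp*(u*zeta), cs + rs*(-u), cp + rp*(u*(zeta - 1)))"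
proof -
  have z1: "(1 - cnj zeta) * cnj zeta = 1"
    unfolding cnj_zeta using zeta2 by (simp add: power2_eq_square algebra_simps)
  have z2: "- ((cnj zeta - 1) * cnj zeta) = 1"
    unfolding cnj_zeta using zeta2 by (simp add: power2_eq_square algebra_simps)
  have uu: "cnj u * u = 1" using cnj_u[OF u] .
  have L: "tri_quantity (cp + rp*u, cs + rs*(u*(1-zeta)), cp + rp*(u*zeta))
      = 2 * (cmod rp)^2 + 2 * (cmod rs)^2 - 4 * Re (cnj rp * rs)"
  proof -
    have d1: "cp + rp*u - (cp + rp*(u*zeta)) = rp * u * (1 - zeta)" by (simp add: algebra_simps)
    have d2: "cs + rs*(u*(1-zeta)) - (cp + rp*(u*zeta)) = rs * u" using cs by (simp add: algebra_simps)
    have n1: "cmod (rp * u * (1 - zeta)) = cmod rp" by (simp add: norm_mult u cmod_1mz)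
    have n2: "cmod (rs * u) = cmod rs" by (simp add: norm_mult u)
    have "cnj (rp * u * (1 - zeta)) * (rs * u) * cnj zeta = cnj rp * rs * (cnj u * u) * ((1 - cnj zeta) * cnj zeta)"
      by (simp add: algebra_simps)
    also have "... = cnj rp * rs" using uu z1 by simp
    finally have eq: "cnj (rp * u * (1 - zeta)) * (rs * u) * cnj zeta = cnj rp * rs" .
    show ?thesis unfolding tq_alt d1 d2 n1 n2 eq by simp
  qed
  have R: "tri_quantity (cp + rp*(u*zeta), cs + rs*(-u), cp + rp*(u*(zeta - 1)))
      = 2 * (cmod rs)^2 + 2 * (cmod rp)^2 - 4 * Re (cnj rs * rp)"
  proof -
    have d1: "cs + rs*(-u) - (cp + rp*(u*zeta)) = rs * u * (zeta - 1)" using cs by (simp add: algebra_simps)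
    have d2: "cp + rp*(u*(zeta - 1)) - (cp + rp*(u*zeta)) = - (rp * u)" by (simp add: algebra_simps)
    have n1: "cmod (rs * u * (zeta - 1)) = cmod rs" by (simp add: norm_mult u cmod_zm1)
    have n2: "cmod (- (rp * u)) = cmod rp" by (simp add: norm_mult u)
    have "cnj (rs * u * (zeta - 1)) * (- (rp * u)) * cnj zeta = cnj rs * rp * (cnj u * u) * (- ((cnj zeta - 1) * cnj zeta))"
      by (simp add: algebra_simps)
    also have "... = cnj rs * rp" using uu z2 by simp
    finally have eq: "cnj (rs * u * (zeta - 1)) * (- (rp * u)) * cnj zeta = cnj rs * rp" .
    show ?thesis by (subst tq_cyc) (unfold tq_alt d1 d2 n1 n2 eq, simp)
  qed
  have "Re (cnj rs * rp) = Re (cnj rp * rs)" by (simp add: algebra_simps)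
  thus ?thesis unfolding L R by simp
qed

definition Qv :: "(complex set \<Rightarrow> complex) \<Rightarrow> complex \<Rightarrow> nat \<Rightarrow> real" where
  "Qv \<phi> p k = tri_quantity (grid_triangle \<phi> p (p + zeta^k) (p + zeta^(Suc k)))"

lemma step:
  assumes hx: "hex_grid \<phi>" and P: "p \<in> lattice"
  shows "Qv \<phi> p (Suc k) = Qv \<phi> p k"
proof -
  define u where "u = zeta^k"
  define s where "s = p + u * zeta"
  have z1: "zeta^(Suc k) = u * zeta" unfolding u_def by (simp add: power_Suc2)
  have z2: "zeta^(Suc (Suc k)) = u * (zeta - 1)" unfolding u_def
    by (metis power_add zeta2 numeral_2_eq_2 add_2_eq_Suc')
  have z3: "zeta^(k + 3) = - u" unfolding u_def by (simp add: power_add zeta3)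
  have z4: "zeta^(k + 4) = - (u * zeta)" unfolding u_def by (simp add: power_add zeta4)
  have z5: "zeta^(k + 5) = u * (1 - zeta)" unfolding u_def by (simp add: power_add zeta5)
  have S: "s \<in> lattice" unfolding s_def using lat_add[OF P lat_zeta_pow[of "Suc k"]] by (simp only: z1)
  obtain cp rp where hp: "\<And>j. \<phi> {p, p + zeta^j} = cp + rp * zeta^j" using hex_at[OF hx P] by blast
  obtain cs rs where hs: "\<And>j. \<phi> {s, s + zeta^j} = cs + rs * zeta^j" using hex_at[OF hx S] by blast
  have um: "cmod u = 1" unfolding u_def by (simp add: norm_power cmod_zeta)
  have A: "\<phi> {p, p + u} = cp + rp * u" using hp[of k] unfolding u_def .
  have C: "\<phi> {p, p + u * zeta} = cp + rp * (u * zeta)" using hp[of "Suc k"] unfolding z1 .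
  have Cs: "\<phi> {p, p + u * zeta} = cs + rs * (- (u * zeta))"
  proof -
    have "s + zeta^(k+4) = p" unfolding z4 s_def by simp
    hence "\<phi> {s, p} = cs + rs * (- (u * zeta))" using hs[of "k+4"] unfolding z4 by simp
    thus ?thesis unfolding s_def by (simp add: insert_commute)
  qed
  have B: "\<phi> {p + u, p + u * zeta} = cs + rs * (u * (1 - zeta))"
  proof -
    have "s + zeta^(k+5) = p + u" unfolding z5 s_def by (simp add: algebra_simps)
    hence "\<phi> {s, p + u} = cs + rs * (u * (1 - zeta))" using hs[of "k+5"] unfolding z5 by simp
    thus ?thesis unfolding s_def by (simp add: insert_commute)
  qed
  have B': "\<phi> {p + u * zeta, p + u * (zeta - 1)} = cs + rs * (- u)"
  proof -
    have eq: "s + zeta^(k+3) = p + u * (zeta - 1)" unfolding z3 s_def by (simp add: algebra_simps)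
    have "\<phi> {s, p + u * (zeta - 1)} = cs + rs * zeta^(k+3)" using hs[of "k+3"] unfolding eq .
    thus ?thesis unfolding z3 s_def .
  qed
  have C': "\<phi> {p, p + u * (zeta - 1)} = cp + rp * (u * (zeta - 1))" using hp[of "Suc (Suc k)"] unfolding z2 .
  have cs: "cs = cp + rp*(u*zeta) + rs*(u*zeta)" using C Cs by (simp add: algebra_simps)
  have "Qv \<phi> p k = tri_quantity (cp + rp*u, cs + rs*(u*(1-zeta)), cp + rp*(u*zeta))"
    unfolding Qv_def grid_triangle_def z1 u_def[symmetric] A B
    by (simp add: insert_commute C)
  moreover have "Qv \<phi> p (Suc k) = tri_quantity (cp + rp*(u*zeta), cs + rs*(-u), cp + rp*(u*(zeta - 1)))"
    unfolding Qv_def grid_triangle_def z1 z2 C B'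
    by (simp add: insert_commute C')
  ultimately show ?thesis using key[OF um cs] by simp
qed

lemma all_k: "hex_grid \<phi> \<Longrightarrow> p \<in> lattice \<Longrightarrow> Qv \<phi> p k = Qv \<phi> p 0"
  by (induction k) (simp_all add: step)

lemma cyc: "Qv \<phi> p k = Qv \<phi> (p + zeta^k) (k + 2)"
proof -
  have "zeta^k + zeta^(k+2) = zeta^k * (1 + zeta^2)" by (simp only: power_add distrib_left mult_1_right)
  also have "... = zeta^(Suc k)" using zeta2 by (simp add: power_Suc2 power2_eq_square)
  finally have e1: "p + zeta^k + zeta^(k+2) = p + zeta^(Suc k)" by (simp add: add.assoc)
  have sk: "Suc (k+2) = k + 3" by simp
  have "zeta^(k+3) = - (zeta^k)" by (simp only: power_add zeta3) simp
  hence e2: "p + zeta^k + zeta^(Suc (k+2)) = p" unfolding sk by simp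
  show ?thesis unfolding Qv_def grid_triangle_def e1 e2
    by (subst tq_cyc) (simp add: insert_commute)
qed

definition V where "V \<phi> p = Qv \<phi> p 0"

lemma V1: "hex_grid \<phi> \<Longrightarrow> p \<in> lattice \<Longrightarrow> V \<phi> (p + 1) = V \<phi> p"
proof -
  assume h: "hex_grid \<phi>" "p \<in> lattice"
  have L: "p + 1 \<in> lattice" using lat_add[OF h(2) lat_zeta_pow[of 0]] by simp
  have "V \<phi> p = Qv \<phi> (p + zeta^0) 2" unfolding V_def using cyc[of \<phi> p 0] by (simp add: numeral_2_eq_2)
  also have "... = V \<phi> (p + 1)" unfolding V_def using all_k[OF h(1) L] by (simp add: numeral_2_eq_2)
  finally show ?thesis by simp
qed

lemma Vz: "hex_grid \<phi> \<Longrightarrow> p \<in> lattice \<Longrightarrow> V \<phi> (p + zeta) = V \<phi> p"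
proof -
  assume h: "hex_grid \<phi>" "p \<in> lattice"
  have L: "p + zeta \<in> lattice" using lat_add[OF h(2) lat_zeta_pow[of 1]] by simp
  have "V \<phi> p = Qv \<phi> p 1" unfolding V_def using all_k[OF h, of 1] by simp
  also have "... = Qv \<phi> (p + zeta^1) 3" using cyc[of \<phi> p 1] by (simp add: numeral_3_eq_3)
  also have "... = V \<phi> (p + zeta)" unfolding V_def using all_k[OF h(1) L] by (simp add: numeral_3_eq_3)
  finally show ?thesis by simp
qed

lemma int_const: "(\<And>i::int. f (i + 1) = f i) \<Longrightarrow> f i = f 0"
proof (induction i rule: int_induct[where k=0])
  case base then show ?case by simp
next
  case (step1 i) then show ?case by metis
next
  case (step2 i) then show ?case by (metis diff_add_cancel)
qed

lemma V_const:
  assumes h: "hex_grid \<phi>" and P: "p \<in> lattice"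
  shows "V \<phi> p = V \<phi> 0"
proof -
  define g where "g m n = V \<phi> (of_int m + of_int n * zeta)" for m n
  have lm: "of_int m + of_int n * zeta \<in> lattice" for m n unfolding lat_iff by blast
  have g1: "g (m + 1) n = g m n" for m n
  proof -
    have eq: "of_int (m+1) + of_int n * zeta = (of_int m + of_int n * zeta) + 1" by simp
    show ?thesis unfolding g_def by (subst eq) (rule V1[OF h lm])
  qed
  have g2: "g m (n + 1) = g m n" for m n
  proof -
    have eq: "of_int m + of_int (n+1) * zeta = (of_int m + of_int n * zeta) + zeta" by (simp add: algebra_simps)
    show ?thesis unfolding g_def by (subst eq) (rule Vz[OF h lm])
  qed
  obtain m n where p: "p = of_int m + of_int n * zeta" using P unfolding lat_iff by blast
  have "g m n = g 0 n" using int_const[of "\<lambda>i. g i n"] g1 by blast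
  also have "... = g 0 0" using int_const[of "\<lambda>i. g 0 i"] g2 by blast
  finally show ?thesis unfolding g_def p by simp
qed

theorem mainTheorem15:
  fixes \<phi> :: "complex set \<Rightarrow> complex"
  assumes "hex_grid \<phi>"
    and "ccw_triple p q s" and "ccw_triple p' q' s'"
  shows "tri_quantity (grid_triangle \<phi> p q s) = tri_quantity (grid_triangle \<phi> p' q' s')"
proof -
  obtain k where k: "p \<in> lattice" "q = p + zeta^k" "s = p + zeta^(Suc k)" using ccw_char[OF assms(2)] by blast
  obtain k' where k': "p' \<in> lattice" "q' = p' + zeta^k'" "s' = p' + zeta^(Suc k')" using ccw_char[OF assms(3)] by blast
  have "tri_quantity (grid_triangle \<phi> p q s) = V \<phi> 0"
    using k all_k[OF assms(1) k(1)] V_const[OF assms(1) k(1)] unfolding V_def Qv_def by simp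
  moreover have "tri_quantity (grid_triangle \<phi> p' q' s') = V \<phi> 0"
    using k' all_k[OF assms(1) k'(1)] V_const[OF assms(1) k'(1)] unfolding V_def Qv_def by simp
  ultimately show ?thesis by simp
qed
end
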